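(* Let $N\ge1$, $k\ge2$, and consider the large-batch model of the round-based $k$IC batch labeling algorithm starting from the uniform class distribution $\pi_i=1/N$, $1\le i\le N$. Then the class distribution of the batch remains uniform in every round $r$, the settling probability in every round is $$P(s\in\mathcal{L}_r)=1-\frac{N}{k}\Big(1-\big(1-\tfrac{1}{N}\big)^k\Big),$$ and the average query rate over round $r$ alone, $R^{kIC}_{2,r}=1/(k\,P(s\in\mathcal{L}_r))$, and over rounds $1,\dots,r$, $R^{kIC}_{2,1:r}$, both equal $$\frac{1}{k-N\big(1-(1-\frac1N)^k\big)}.$$ Moreover this quantity is asymptotically equal to $\frac{2N}{k(k-1)}$ as $N\to\infty$ with $k$ fixed.
   Context: Large-batch model: in each round each $k$IC query consists of $k$ samples with i.i.d. classes drawn from the current batch class distribution $\boldsymbol{\pi}$; an error-free oracle reveals which samples share a class; one representative per class present is returned to the next batch and the others are settled. The settling probability $P(s\in\mathcal{L})$ is the expected number of settled samples per query divided by $k$, and the next batch's class distribution is $\pi'_i=\frac{1-(1-\pi_i)^k}{N-\sum_j(1-\pi_j)^k}$. Batch sizes evolve as $L_{r+1}=L_r(1-p_r)$ with $p_r$ the settling probability in round $r$; round $r$ uses $L_r/k$ queries and settles $L_rp_r$ samples; $R^{kIC}_{2,1:r}$ is total queries over rounds $1,\dots,r$ divided by total settled samples over these rounds. *)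

theory Defs
  imports "HOL-Analysis.Analysis" "HOL-Library.Landau_Symbols"
begin

text \<open>Large-batch model of round-based kIC batch labelling. Classes are indexed
  by 0..N-1; a class distribution is a function dst :: nat => real.\<close>

definition uniform_dist :: "nat \<Rightarrow> nat \<Rightarrow> real" where
  "uniform_dist N = (\<lambda>i. 1 / real N)"

definition next_dist :: "nat \<Rightarrow> nat \<Rightarrow> (nat \<Rightarrow> real) \<Rightarrow> (nat \<Rightarrow> real)" where
  "next_dist N k dst = (\<lambda>i. (1 - (1 - dst i) ^ k) /
      (real N - (\<Sum>j<N. (1 - dst j) ^ k)))"

text \<open>Settling probability: expected number of settled samples in one kIC query
  (k samples with i.i.d. classes from dst; all but one representative per
  present class are settled), divided by k.\<close>
definition settle_prob :: "nat \<Rightarrow> nat \<Rightarrow> (nat \<Rightarrow> real) \<Rightarrow> real" where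
  "settle_prob N k dst =
     (\<Sum>f\<in>PiE {..<k} (\<lambda>_. {..<N}).
        (\<Prod>j<k. dst (f j)) * real (k - card (f ` {..<k}))) / real k"

text \<open>Class distribution of round r (rounds are numbered from 1).\<close>
definition round_dist :: "nat \<Rightarrow> nat \<Rightarrow> nat \<Rightarrow> (nat \<Rightarrow> real)" where
  "round_dist N k r = (next_dist N k ^^ (r - 1)) (uniform_dist N)"

definition round_settle :: "nat \<Rightarrow> nat \<Rightarrow> nat \<Rightarrow> real" where
  "round_settle N k r = settle_prob N k (round_dist N k r)"

text \<open>Batch sizes: batch0 N k L s is L_{s+1}; L_1 = L, L_{r+1} = L_r (1 - p_r).\<close>
primrec batch0 :: "nat \<Rightarrow> nat \<Rightarrow> real \<Rightarrow> nat \<Rightarrow> real" where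
  "batch0 N k L 0 = L"
| "batch0 N k L (Suc s) = batch0 N k L s * (1 - round_settle N k (Suc s))"

definition batch :: "nat \<Rightarrow> nat \<Rightarrow> real \<Rightarrow> nat \<Rightarrow> real" where
  "batch N k L r = batch0 N k L (r - 1)"

definition rate_round :: "nat \<Rightarrow> nat \<Rightarrow> nat \<Rightarrow> real" where
  "rate_round N k r = 1 / (real k * round_settle N k r)"

definition rate_upto :: "nat \<Rightarrow> nat \<Rightarrow> real \<Rightarrow> nat \<Rightarrow> real" where
  "rate_upto N k L r =
     (\<Sum>i\<in>{1..r}. batch N k L i / real k) /
     (\<Sum>i\<in>{1..r}. batch N k L i * round_settle N k i)"

end

theory Submission
  imports Defs
begin

fun Pk :: "nat \<Rightarrow> real \<Rightarrow> real" where
  "Pk 0 x = 0"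
| "Pk (Suc k) x = (1 - x) * Pk k x + real k"

lemma Pk_id: "(1 - x) ^ k - 1 + real k * x = x^2 * Pk k x"
proof (induction k)
  case 0 then show ?case by simp
next
  case (Suc k)
  have "(1 - x) ^ Suc k - 1 + real (Suc k) * x
      = (1 - x) * ((1 - x) ^ k - 1 + real k * x) + real k * x^2"
    by (simp add: algebra_simps power2_eq_square)
  also have "\<dots> = x^2 * Pk (Suc k) x" using Suc by (simp add: algebra_simps)
  finally show ?case .
qed

lemma Pk_cont: "isCont (Pk k) x"
  by (induction k) (auto intro!: continuous_intros)

lemma Pk_0: "Pk k 0 = real k * (real k - 1) / 2"
  by (induction k) (auto simp: field_simps)

lemma asym:
  assumes "k \<ge> 2"
  shows "(\<lambda>n::nat. 1 / (real k - real n * (1 - (1 - 1 / real n) ^ k)))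
         \<sim>[at_top] (\<lambda>n::nat. 2 * real n / (real k * (real k - 1)))"
proof (rule asymp_equivI')
  have c: "Pk k 0 \<noteq> 0" using assms by (simp add: Pk_0)
  have "((\<lambda>n::nat. Pk k (1 / real n)) \<longlongrightarrow> Pk k 0) at_top"
    by (rule isCont_tendsto_compose[OF Pk_cont]) (rule lim_const_over_n)
  then have "((\<lambda>n::nat. Pk k 0 / Pk k (1 / real n)) \<longlongrightarrow> Pk k 0 / Pk k 0) at_top"
    using c by (intro tendsto_intros) auto
  then have L: "((\<lambda>n::nat. Pk k 0 / Pk k (1 / real n)) \<longlongrightarrow> 1) at_top"
    using c by simp
  show "((\<lambda>n::nat. (1 / (real k - real n * (1 - (1 - 1 / real n) ^ k))) /
        (2 * real n / (real k * (real k - 1)))) \<longlongrightarrow> 1) at_top"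
  proof (rule Lim_transform_eventually[OF L])
    show "\<forall>\<^sub>F n in at_top. Pk k 0 / Pk k (1 / real n) = (1 / (real k - real n * (1 - (1 - 1 / real n) ^ k))) /
        (2 * real n / (real k * (real k - 1)))"
      using eventually_ge_at_top[of "1::nat"]
    proof eventually_elim
      case (elim n)
      have n: "real n > 0" using elim by simp
      have "(1 - 1/real n) ^ k - 1 + real k * (1/real n) = (1/real n)^2 * Pk k (1/real n)"
        by (rule Pk_id)
      then have e: "1 - (1 - 1/real n) ^ k = real k * (1/real n) - (1/real n)^2 * Pk k (1/real n)"
        by linarith
      have D: "real k - real n * (1 - (1 - 1 / real n) ^ k) = Pk k (1/real n) / real n"
        unfolding e using n by (simp add: field_simps power2_eq_square)
      moreover have "real k * (real k - 1) \<noteq> 0" using assms by simp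
      ultimately show ?case unfolding D using n
        by (cases "Pk k (1/real n) = 0") (simp_all add: Pk_0 field_simps)
    qed
  qed
qed
lemma card_sum_indicator:
  assumes "finite B" "T \<subseteq> B"
  shows "real (card T) = (\<Sum>c\<in>B. if c \<in> T then 1 else 0)"
proof -
  have "(\<Sum>c\<in>B. if c \<in> T then (1::real) else 0) = (\<Sum>c\<in>B \<inter> T. 1)"
    using assms(1) by (simp add: sum.inter_restrict[symmetric] of_bool_def[symmetric] del: of_bool_def)
  also have "B \<inter> T = T" using assms(2) by blast
  finally show ?thesis by simp
qed

lemma count_images:
  fixes N k :: nat
  defines "P \<equiv> PiE {..<k} (\<lambda>_. {..<N})"
  shows "(\<Sum>f\<in>P. real (card (f ` {..<k}))) = real N * (real N ^ k - (real N - 1) ^ k)"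
proof -
  have fP: "finite P" unfolding P_def by (simp add: finite_PiE)
  have "(\<Sum>f\<in>P. real (card (f ` {..<k}))) = (\<Sum>f\<in>P. \<Sum>c<N. if c \<in> f ` {..<k} then 1 else 0)"
  proof (rule sum.cong[OF refl])
    fix f assume "f \<in> P"
    then have "f ` {..<k} \<subseteq> {..<N}" unfolding P_def by (auto simp: PiE_def Pi_def)
    then show "real (card (f ` {..<k})) = (\<Sum>c<N. if c \<in> f ` {..<k} then 1 else 0)"
      by (intro card_sum_indicator) auto
  qed
  also have "\<dots> = (\<Sum>c<N. \<Sum>f\<in>P. if c \<in> f ` {..<k} then 1 else 0)"
    by (rule sum.swap)
  also have "\<dots> = (\<Sum>c<N. real N ^ k - (real N - 1) ^ k)"
  proof (rule sum.cong[OF refl])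
    fix c assume c: "c \<in> {..<N}"
    let ?Q = "PiE {..<k} (\<lambda>_. {..<N} - {c})"
    have sub: "?Q \<subseteq> P" unfolding P_def by (auto simp: PiE_def Pi_def)
    have eq: "{f \<in> P. c \<in> f ` {..<k}} = P - ?Q"
      unfolding P_def by (auto simp: PiE_def Pi_def)
    have cP: "card P = N ^ k" unfolding P_def by (simp add: card_PiE)
    have cQ: "card ?Q = (N - 1) ^ k" using c by (simp add: card_PiE)
    have "(\<Sum>f\<in>P. if c \<in> f ` {..<k} then 1 else 0) = real (card {f \<in> P. c \<in> f ` {..<k}})"
      using fP by (simp add: sum.If_cases Int_def conj_commute)
    also have "\<dots> = real (card P - card ?Q)" unfolding eq
      using fP sub by (simp add: card_Diff_subset finite_subset)
    also have "\<dots> = real (card P) - real (card ?Q)"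
      using card_mono[OF fP sub] by (simp add: of_nat_diff)
    also have "\<dots> = real N ^ k - (real N - 1) ^ k"
      using c by (simp add: cP cQ of_nat_diff)
    finally show "(\<Sum>f\<in>P. if c \<in> f ` {..<k} then 1 else 0) = real N ^ k - (real N - 1) ^ k" .
  qed
  also have "\<dots> = real N * (real N ^ k - (real N - 1) ^ k)" by simp
  finally show ?thesis .
qed
lemma pow_lt1:
  assumes "N \<ge> 1" "k \<ge> 2"
  shows "(1 - 1 / real N) ^ k < 1" "0 \<le> (1 - 1 / real N) ^ k"
proof -
  have a: "0 \<le> 1 - 1 / real N" "1 - 1 / real N < 1" using assms by (auto simp: field_simps)
  show "(1 - 1 / real N) ^ k < 1" using a assms by (simp add: power_less_one_iff)
  show "0 \<le> (1 - 1 / real N) ^ k" using a by simp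
qed

lemma next_uniform:
  assumes "N \<ge> 1" "k \<ge> 2"
  shows "next_dist N k (uniform_dist N) = uniform_dist N"
proof
  fix i
  have "(1 - 1 / real N) ^ k < 1" using pow_lt1[OF assms] by simp
  then have d: "real N - real N * (1 - 1 / real N) ^ k \<noteq> 0" using assms by auto
  show "next_dist N k (uniform_dist N) i = uniform_dist N i"
    unfolding next_dist_def uniform_dist_def using d assms
    by (simp add: field_simps)
qed

lemma round_dist_uniform:
  assumes "N \<ge> 1" "k \<ge> 2"
  shows "round_dist N k r = uniform_dist N"
proof -
  have "\<And>m. (next_dist N k ^^ m) (uniform_dist N) = uniform_dist N"
  proof -
    fix m show "(next_dist N k ^^ m) (uniform_dist N) = uniform_dist N"
      by (induction m) (simp_all add: next_uniform[OF assms])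
  qed
  then show ?thesis unfolding round_dist_def by simp
qed

lemma settle_uniform:
  assumes "N \<ge> 1" "k \<ge> 2"
  shows "settle_prob N k (uniform_dist N) = 1 - real N / real k * (1 - (1 - 1 / real N) ^ k)"
proof -
  define P where "P = PiE {..<k} (\<lambda>_. {..<N})"
  have fP: "finite P" unfolding P_def by (simp add: finite_PiE)
  have cP: "card P = N ^ k" unfolding P_def by (simp add: card_PiE)
  have "(\<Sum>f\<in>P. (\<Prod>j<k. uniform_dist N (f j)) * real (k - card (f ` {..<k})))
      = (\<Sum>f\<in>P. (1 / real N) ^ k * (real k - real (card (f ` {..<k}))))"
  proof (rule sum.cong[OF refl])
    fix f assume "f \<in> P"
    have "card (f ` {..<k}) \<le> k" using card_image_le[of "{..<k}" f] by simp
    then show "(\<Prod>j<k. uniform_dist N (f j)) * real (k - card (f ` {..<k}))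
      = (1 / real N) ^ k * (real k - real (card (f ` {..<k})))"
      by (simp add: uniform_dist_def of_nat_diff)
  qed
  also have "\<dots> = (1 / real N) ^ k * (real (card P) * real k - (\<Sum>f\<in>P. real (card (f ` {..<k}))))"
    by (simp add: sum_distrib_left[symmetric] sum_subtractf)
  also have "\<dots> = (1 / real N) ^ k * (real N ^ k * real k - real N * (real N ^ k - (real N - 1) ^ k))"
    using count_images[of k N] unfolding P_def[symmetric] by (simp add: cP)
  finally have S: "(\<Sum>f\<in>P. (\<Prod>j<k. uniform_dist N (f j)) * real (k - card (f ` {..<k})))
      = (1 / real N) ^ k * (real N ^ k * real k - real N * (real N ^ k - (real N - 1) ^ k))" .
  have e: "(1 - 1 / real N) ^ k = (real N - 1) ^ k / real N ^ k"
  proof -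
    have "1 - 1 / real N = (real N - 1) / real N" using assms by (simp add: diff_divide_distrib)
    then show ?thesis by (simp add: power_divide)
  qed
  have Npos: "real N > 0" "real k > 0" using assms by auto
  have alg: "\<And>a b n kk::real. a > 0 \<Longrightarrow> kk > 0 \<Longrightarrow>
     (1/a) * (a*kk - n*(a - b)) / kk = 1 - n/kk*(1 - b/a)"
    by (simp add: field_simps)
  have NK: "real N ^ k > 0" using Npos by simp
  show ?thesis unfolding settle_prob_def P_def[symmetric] S e power_one_over
    by (rule alg[OF NK Npos(2)])
qed
theorem corollary3:
  fixes N k :: nat and L :: real
  assumes "N \<ge> 1" and "k \<ge> 2" and "L > 0"
  shows "(\<forall>r\<ge>1. \<forall>i<N. round_dist N k r i = 1 / real N)
    \<and> (\<forall>r\<ge>1. round_settle N k r =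
          1 - real N / real k * (1 - (1 - 1 / real N) ^ k))
    \<and> (\<forall>r\<ge>1. rate_round N k r = 1 / (real k - real N * (1 - (1 - 1 / real N) ^ k)))
    \<and> (\<forall>r\<ge>1. rate_upto N k L r = 1 / (real k - real N * (1 - (1 - 1 / real N) ^ k)))
    \<and> ((\<lambda>n::nat. 1 / (real k - real n * (1 - (1 - 1 / real n) ^ k)))
         \<sim>[at_top] (\<lambda>n::nat. 2 * real n / (real k * (real k - 1))))"
proof -
  define p where "p = 1 - real N / real k * (1 - (1 - 1 / real N) ^ k)"
  have RS: "\<And>r. round_settle N k r = p"
    unfolding round_settle_def round_dist_uniform[OF assms(1,2)] settle_uniform[OF assms(1,2)] p_def ..
  have kpos: "real k > 0" using assms by simp
  have kp: "real k * p = real k - real N * (1 - (1 - 1 / real N) ^ k)"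
    unfolding p_def right_diff_distrib using kpos by simp
  have p1: "1 - p \<ge> 0"
  proof -
    have "real N * (1 - (1 - 1 / real N) ^ k) \<ge> 0"
      using pow_lt1[OF assms(1,2)] by simp
    then show ?thesis unfolding p_def using kpos by simp
  qed
  have B: "\<And>s. batch0 N k L s = L * (1 - p) ^ s"
  proof -
    fix s show "batch0 N k L s = L * (1 - p) ^ s" by (induction s) (simp_all add: RS)
  qed
  have rate: "rate_upto N k L r = 1 / (real k - real N * (1 - (1 - 1 / real N) ^ k))" if r: "r \<ge> 1" for r
  proof -
    define S where "S = (\<Sum>i\<in>{1..r}. batch N k L i)"
    have nn: "\<And>i. batch N k L i \<ge> 0" unfolding batch_def B using assms(3) p1 by simp
    have "batch N k L 1 \<le> S" unfolding S_def
      by (rule member_le_sum) (use r nn in auto)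
    then have Sp: "S > 0" unfolding batch_def B using assms(3) by simp
    have "rate_upto N k L r = (S / real k) / (S * p)"
      unfolding rate_upto_def S_def RS by (simp add: sum_divide_distrib sum_distrib_right)
    also have "\<dots> = 1 / (real k * p)" using Sp kpos
      by (cases "p = 0") (simp_all add: field_simps)
    finally show ?thesis unfolding kp .
  qed
  have RR: "rate_round N k r = 1 / (real k - real N * (1 - (1 - 1 / real N) ^ k))" for r
    unfolding rate_round_def RS kp ..
  have RD: "round_dist N k r i = 1 / real N" for r i
    unfolding round_dist_uniform[OF assms(1,2)] uniform_dist_def ..
  have RS': "\<forall>r\<ge>1. round_settle N k r =
          1 - real N / real k * (1 - (1 - 1 / real N) ^ k)"
    using RS unfolding p_def by simp
  show ?thesis
  proof (intro conjI)
    show "\<forall>r\<ge>1. \<forall>i<N. round_dist N k r i = 1 / real N" using RD by simp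
    show "\<forall>r\<ge>1. rate_round N k r = 1 / (real k - real N * (1 - (1 - 1 / real N) ^ k))"
      using RR by simp
    show "\<forall>r\<ge>1. rate_upto N k L r = 1 / (real k - real N * (1 - (1 - 1 / real N) ^ k))"
      using rate by simp
  qed (rule RS', rule asym[OF assms(2)])
qed

end
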